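(* Let $F:\mathbb{R}^p\to\mathbb{R}^p$ be single-valued and $L$-Lipschitz continuous, $T:\mathbb{R}^p\rightrightarrows\mathbb{R}^p$, and suppose $\Phi:=F+T$ is maximally monotone. Let $\eta>0$ and let $\{(x^k,y^k)\}$ be generated by: start from $x^0\in\mathrm{dom}\,\Phi$, set $x^{-1}:=x^0$, and for $k\ge0$ $$y^k:=2x^k-x^{k-1},\qquad x^{k+1}:=J_{\eta T}(x^k-\eta Fy^k).$$ For $k\ge1$ let $\xi^k:=\frac1\eta(x^{k-1}-x^k)-Fy^{k-1}\in Tx^k$. Then for every $k\ge1$, $$\|Fx^k+\xi^k\|^2\le\frac{5L^2\eta^2+3}{3\eta^2}\|x^k-y^k\|^2+\frac{5L^2\eta^2+3}{5\eta^2}\|x^k-y^{k-1}\|^2.$$ Moreover, if $\sqrt2L\eta<1$, then with $\omega:=\frac{2L^2\eta^2}{1-2L^2\eta^2}>0$, for every $k\ge1$, $$\begin{aligned}\|Fx^{k+1}+\xi^{k+1}\|^2+\omega\|Fx^{k+1}-Fy^k\|^2\le{}&\|Fx^k+\xi^k\|^2+\omega\|Fx^k-Fy^{k-1}\|^2\\&-\Big(\frac{1-4L^2\eta^2}{1-2L^2\eta^2}\Big)\|Fy^k-Fx^k+\xi^{k+1}-\xi^k\|^2.\end{aligned}$$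
   Context: $J_{\eta T}:=(\mathbb{I}+\eta T)^{-1}$ is the resolvent of $\eta T$. $F$ is $L$-Lipschitz if $\|Fx-Fy\|\le L\|x-y\|$. *)

theory Defs
  imports "HOL-Analysis.Analysis"
begin

definition monotone_op :: "('a::real_inner \<Rightarrow> 'a set) \<Rightarrow> bool" where
  "monotone_op A \<longleftrightarrow>
     (\<forall>x y u v. u \<in> A x \<longrightarrow> v \<in> A y \<longrightarrow> inner (u - v) (x - y) \<ge> 0)"

definition maximal_monotone :: "('a::real_inner \<Rightarrow> 'a set) \<Rightarrow> bool" where
  "maximal_monotone A \<longleftrightarrow> monotone_op A \<and>
     (\<forall>x u. (\<forall>y v. v \<in> A y \<longrightarrow> inner (u - v) (x - y) \<ge> 0) \<longrightarrow> u \<in> A x)"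

definition op_dom :: "('a \<Rightarrow> 'b set) \<Rightarrow> 'a set" where
  "op_dom A = {x. A x \<noteq> {}}"

definition op_plus :: "('a \<Rightarrow> 'a::real_vector) \<Rightarrow> ('a \<Rightarrow> 'a set) \<Rightarrow> 'a \<Rightarrow> 'a set" where
  "op_plus F T x = (\<lambda>v. F x + v) ` T x"

text \<open>Resolvent J_{eta T} = (I + eta T)^{-1}, as a set-valued map.\<close>
definition resolvent :: "real \<Rightarrow> ('a::real_vector \<Rightarrow> 'a set) \<Rightarrow> 'a \<Rightarrow> 'a set" where
  "resolvent \<eta> T u = {x. \<exists>v \<in> T x. u = x + \<eta> *\<^sub>R v}"

end

theory Submission
  imports Defs
begin

lemma p2_key:
  fixes w1 w0 d1 :: "'a::real_inner"
  assumes "inner (w1 - w0) (w1 - d1) \<le> 0"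
  shows "(norm w1)\<^sup>2 \<le> (norm w0)\<^sup>2 + (norm d1)\<^sup>2 - (norm (w1 - w0 - d1))\<^sup>2"
proof -
  have "(norm (w1 - w0 - d1))\<^sup>2 = (norm w1)\<^sup>2 + (norm w0)\<^sup>2 + (norm d1)\<^sup>2
      - 2 * inner w1 w0 - 2 * inner w1 d1 + 2 * inner w0 d1"
    by (simp add: power2_norm_eq_inner inner_diff_left inner_diff_right inner_commute)
  moreover have "inner (w1 - w0) (w1 - d1) = (norm w1)\<^sup>2 - inner w1 d1 - inner w0 w1 + inner w0 d1"
    by (simp add: power2_norm_eq_inner inner_diff_left inner_diff_right inner_commute)
  ultimately show ?thesis using assms by (simp add: inner_commute)
qed

lemma norm_sum_sq: fixes a b :: "'a::real_inner"
  shows "(norm (a + b))\<^sup>2 \<le> 2 * (norm a)\<^sup>2 + 2 * (norm b)\<^sup>2"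
proof -
  have "(norm (a + b))\<^sup>2 + (norm (a - b))\<^sup>2 = 2 * (norm a)\<^sup>2 + 2 * (norm b)\<^sup>2"
    by (simp add: power2_norm_eq_inner inner_diff_left inner_diff_right inner_add_left inner_add_right inner_commute)
  then show ?thesis by (smt (verit) zero_le_power2)
qed

lemma p2_scalar:
  fixes W1 W0 D1 D0 Z r :: real
  assumes "W1 \<le> W0 + D1 - Z" "D1 \<le> r * (2 * Z + 2 * D0)" "0 \<le> r" "2 * r < 1"
  shows "W1 + 2 * r / (1 - 2 * r) * D1 \<le> W0 + 2 * r / (1 - 2 * r) * D0 - ((1 - 4 * r) / (1 - 2 * r)) * Z"
proof -
  define q where "q = 1 - 2 * r"
  have pos: "q > 0" using assms by (simp add: q_def)
  have "q * W1 \<le> q * (W0 + D1 - Z)" using assms(1) pos by simp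
  hence main: "q * W1 + 2 * r * D1 \<le> q * W0 + 2 * r * D0 - (1 - 4 * r) * Z"
    using assms(2) by (simp add: algebra_simps q_def)
  have e1: "W1 + 2 * r / q * D1 = (q * W1 + 2 * r * D1) / q" using pos by (simp add: field_simps)
  have e2: "W0 + 2 * r / q * D0 - ((1 - 4 * r) / q) * Z = (q * W0 + 2 * r * D0 - (1 - 4 * r) * Z) / q"
    using pos by (simp add: field_simps)
  show ?thesis unfolding q_def[symmetric] e1 e2 using main pos by (simp add: divide_right_mono)
qed

lemma p1_scalar:
  fixes a b A B L \<eta> :: real
  assumes "0 \<le> a" "a \<le> L * A" "0 \<le> L" "\<eta> > 0" "b = B / \<eta>" "0 \<le> B" "0 \<le> A"
  shows "(a + b)\<^sup>2 \<le> (5 * L\<^sup>2 * \<eta>\<^sup>2 + 3) / (3 * \<eta>\<^sup>2) * B\<^sup>2 + (5 * L\<^sup>2 * \<eta>\<^sup>2 + 3) / (5 * \<eta>\<^sup>2) * A\<^sup>2"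
proof -
  define s where "s = B / \<eta>"
  define t where "t = A / \<eta>"
  have "(a + b)\<^sup>2 \<le> (L * A + B / \<eta>)\<^sup>2"
    using assms by (intro power_mono) auto
  also have "\<dots> = L\<^sup>2 * A\<^sup>2 + 2 * (L * \<eta> * s) * t + s\<^sup>2"
    using assms(4) by (simp add: s_def t_def power2_eq_square field_simps)
  also have "\<dots> \<le> L\<^sup>2 * A\<^sup>2 + (5/3 * (L * \<eta> * s)\<^sup>2 + 3/5 * t\<^sup>2) + s\<^sup>2"
  proof -
    have "0 \<le> (5 * (L * \<eta> * s) - 3 * t)\<^sup>2" by simp
    thus ?thesis by (simp add: power2_eq_square algebra_simps)
  qed
  also have "\<dots> = (5 * L\<^sup>2 * \<eta>\<^sup>2 + 3) / (3 * \<eta>\<^sup>2) * B\<^sup>2 + (5 * L\<^sup>2 * \<eta>\<^sup>2 + 3) / (5 * \<eta>\<^sup>2) * A\<^sup>2"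
    using assms(4) by (simp add: s_def t_def power2_eq_square field_simps)
  finally show ?thesis .
qed
theorem lemma8:
  fixes F :: "real^'p \<Rightarrow> real^'p" and T :: "real^'p \<Rightarrow> (real^'p) set"
    and L \<eta> :: real and x y \<xi> :: "nat \<Rightarrow> real^'p"
  assumes lip: "L-lipschitz_on UNIV F"
    and maxmon: "maximal_monotone (op_plus F T)"
    and eta: "\<eta> > 0"
    and x0: "x 0 \<in> op_dom (op_plus F T)"
    and y_def: "\<And>k. y k = 2 *\<^sub>R x k - x (k - 1)"
    and x_step: "\<And>k. x (Suc k) \<in> resolvent \<eta> T (x k - \<eta> *\<^sub>R F (y k))"
    and xi_def: "\<And>k. k \<ge> 1 \<Longrightarrow> \<xi> k = (1 / \<eta>) *\<^sub>R (x (k - 1) - x k) - F (y (k - 1))"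
  shows "(\<forall>k\<ge>1. (norm (F (x k) + \<xi> k))\<^sup>2 \<le>
            (5 * L\<^sup>2 * \<eta>\<^sup>2 + 3) / (3 * \<eta>\<^sup>2) * (norm (x k - y k))\<^sup>2
          + (5 * L\<^sup>2 * \<eta>\<^sup>2 + 3) / (5 * \<eta>\<^sup>2) * (norm (x k - y (k - 1)))\<^sup>2)
       \<and> (sqrt 2 * L * \<eta> < 1 \<longrightarrow>
           (let \<omega> = 2 * L\<^sup>2 * \<eta>\<^sup>2 / (1 - 2 * L\<^sup>2 * \<eta>\<^sup>2) in
            \<forall>k\<ge>1. (norm (F (x (Suc k)) + \<xi> (Suc k)))\<^sup>2
                     + \<omega> * (norm (F (x (Suc k)) - F (y k)))\<^sup>2
                   \<le> (norm (F (x k) + \<xi> k))\<^sup>2 + \<omega> * (norm (F (x k) - F (y (k - 1))))\<^sup>2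
                     - ((1 - 4 * L\<^sup>2 * \<eta>\<^sup>2) / (1 - 2 * L\<^sup>2 * \<eta>\<^sup>2))
                       * (norm (F (y k) - F (x k) + \<xi> (Suc k) - \<xi> k))\<^sup>2))"
proof -
  have L0: "0 \<le> L" using lip by (simp add: lipschitz_on_def)
  have lipF: "\<And>a b. norm (F a - F b) \<le> L * norm (a - b)"
    using lip by (simp add: lipschitz_on_def dist_norm)
  have xiT: "\<xi> (Suc k) \<in> T (x (Suc k))" for k
  proof -
    obtain v where v: "v \<in> T (x (Suc k))" "x k - \<eta> *\<^sub>R F (y k) = x (Suc k) + \<eta> *\<^sub>R v"
      using x_step[of k] unfolding resolvent_def by blast
    have "\<xi> (Suc k) = (1 / \<eta>) *\<^sub>R (x k - x (Suc k)) - F (y k)" using xi_def[of "Suc k"] by simp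
    also have "x k - x (Suc k) = \<eta> *\<^sub>R (v + F (y k))" using v(2) by (simp add: algebra_simps)
    finally have "\<xi> (Suc k) = v" using eta by simp
    thus ?thesis using v by simp
  qed
  have step: "x (Suc k) - x k = - \<eta> *\<^sub>R (\<xi> (Suc k) + F (y k))" for k
  proof -
    have "\<xi> (Suc k) + F (y k) = (1 / \<eta>) *\<^sub>R (x k - x (Suc k))" using xi_def[of "Suc k"] by simp
    hence "\<eta> *\<^sub>R (\<xi> (Suc k) + F (y k)) = x k - x (Suc k)" using eta by simp
    thus ?thesis by (simp add: algebra_simps)
  qed
  have yk: "x k - y k = x (k - 1) - x k" for k using y_def[of k] by (simp add: algebra_simps scaleR_2)
  have part1: "\<forall>k\<ge>1. (norm (F (x k) + \<xi> k))\<^sup>2 \<le>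
            (5 * L\<^sup>2 * \<eta>\<^sup>2 + 3) / (3 * \<eta>\<^sup>2) * (norm (x k - y k))\<^sup>2
          + (5 * L\<^sup>2 * \<eta>\<^sup>2 + 3) / (5 * \<eta>\<^sup>2) * (norm (x k - y (k - 1)))\<^sup>2"
  proof (intro allI impI)
    fix k :: nat assume k: "k \<ge> 1"
    have e: "F (x k) + \<xi> k = (F (x k) - F (y (k - 1))) + (1 / \<eta>) *\<^sub>R (x k - y k)"
      unfolding yk[of k] xi_def[OF k] by (simp add: algebra_simps)
    have "norm (F (x k) + \<xi> k) \<le> norm (F (x k) - F (y (k - 1))) + norm ((1 / \<eta>) *\<^sub>R (x k - y k))"
      unfolding e by (rule norm_triangle_ineq)
    hence "(norm (F (x k) + \<xi> k))\<^sup>2 \<le> (norm (F (x k) - F (y (k - 1))) + norm ((1 / \<eta>) *\<^sub>R (x k - y k)))\<^sup>2"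
      by (intro power_mono) auto
    also have "\<dots> \<le> (5 * L\<^sup>2 * \<eta>\<^sup>2 + 3) / (3 * \<eta>\<^sup>2) * (norm (x k - y k))\<^sup>2
          + (5 * L\<^sup>2 * \<eta>\<^sup>2 + 3) / (5 * \<eta>\<^sup>2) * (norm (x k - y (k - 1)))\<^sup>2"
      by (rule p1_scalar) (use eta L0 lipF in auto)
    finally show "(norm (F (x k) + \<xi> k))\<^sup>2 \<le> (5 * L\<^sup>2 * \<eta>\<^sup>2 + 3) / (3 * \<eta>\<^sup>2) * (norm (x k - y k))\<^sup>2
          + (5 * L\<^sup>2 * \<eta>\<^sup>2 + 3) / (5 * \<eta>\<^sup>2) * (norm (x k - y (k - 1)))\<^sup>2" .
  qed
  have part2: "\<forall>k\<ge>1. (norm (F (x (Suc k)) + \<xi> (Suc k)))\<^sup>2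
                     + 2 * (L\<^sup>2 * \<eta>\<^sup>2) / (1 - 2 * (L\<^sup>2 * \<eta>\<^sup>2)) * (norm (F (x (Suc k)) - F (y k)))\<^sup>2
                   \<le> (norm (F (x k) + \<xi> k))\<^sup>2 + 2 * (L\<^sup>2 * \<eta>\<^sup>2) / (1 - 2 * (L\<^sup>2 * \<eta>\<^sup>2)) * (norm (F (x k) - F (y (k - 1))))\<^sup>2
                     - ((1 - 4 * (L\<^sup>2 * \<eta>\<^sup>2)) / (1 - 2 * (L\<^sup>2 * \<eta>\<^sup>2)))
                       * (norm (F (y k) - F (x k) + \<xi> (Suc k) - \<xi> k))\<^sup>2"
    if small: "2 * (L\<^sup>2 * \<eta>\<^sup>2) < 1"
  proof (intro allI impI)
    fix k :: nat assume k: "k \<ge> 1"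
    then obtain j where j: "k = Suc j" by (cases k) auto
    define w1 where "w1 = F (x (Suc k)) + \<xi> (Suc k)"
    define w0 where "w0 = F (x k) + \<xi> k"
    define d1 where "d1 = F (x (Suc k)) - F (y k)"
    define d0 where "d0 = F (x k) - F (y (k - 1))"
    have z: "F (y k) - F (x k) + \<xi> (Suc k) - \<xi> k = w1 - w0 - d1"
      by (simp add: w1_def w0_def d1_def algebra_simps)
    have in1: "w1 \<in> op_plus F T (x (Suc k))" unfolding w1_def op_plus_def using xiT by blast
    have in0: "w0 \<in> op_plus F T (x k)" unfolding w0_def op_plus_def using xiT[of j] j by blast
    have "0 \<le> inner (w1 - w0) (x (Suc k) - x k)"
      using maxmon in1 in0 unfolding maximal_monotone_def monotone_op_def by blast
    also have "x (Suc k) - x k = - \<eta> *\<^sub>R (w1 - d1)"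
      using step[of k] by (simp add: w1_def d1_def algebra_simps)
    finally have "0 \<le> - \<eta> * inner (w1 - w0) (w1 - d1)" by simp
    hence mono: "inner (w1 - w0) (w1 - d1) \<le> 0" using eta
      by (simp add: mult_le_0_iff)
    have A: "(norm w1)\<^sup>2 \<le> (norm w0)\<^sup>2 + (norm d1)\<^sup>2 - (norm (w1 - w0 - d1))\<^sup>2"
      by (rule p2_key[OF mono])
    have xy: "x (Suc k) - y k = - \<eta> *\<^sub>R ((w1 - w0 - d1) + d0)"
    proof -
      have yy: "y k = x k + x k - x j" using y_def[of k] j by (simp add: scaleR_2)
      have "x (Suc k) - y k = (x (Suc k) - x k) - (x k - x j)" unfolding yy
        by (simp add: algebra_simps)
      also have "\<dots> = - \<eta> *\<^sub>R (\<xi> (Suc k) + F (y k)) + \<eta> *\<^sub>R (\<xi> k + F (y j))"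
        using step[of k] step[of j] j by simp
      also have "\<dots> = - \<eta> *\<^sub>R ((w1 - w0 - d1) + d0)"
        by (simp add: w1_def w0_def d1_def d0_def j algebra_simps)
      finally show ?thesis .
    qed
    have "norm d1 \<le> L * norm (x (Suc k) - y k)" unfolding d1_def by (rule lipF)
    also have "\<dots> = L * \<eta> * norm ((w1 - w0 - d1) + d0)" unfolding xy using eta by simp
    finally have "(norm d1)\<^sup>2 \<le> (L * \<eta> * norm ((w1 - w0 - d1) + d0))\<^sup>2"
      by (intro power_mono) auto
    also have "\<dots> = (L\<^sup>2 * \<eta>\<^sup>2) * (norm ((w1 - w0 - d1) + d0))\<^sup>2" by (simp add: power_mult_distrib)
    also have "\<dots> \<le> (L\<^sup>2 * \<eta>\<^sup>2) * (2 * (norm (w1 - w0 - d1))\<^sup>2 + 2 * (norm d0)\<^sup>2)"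
      by (intro mult_left_mono norm_sum_sq) auto
    finally have B: "(norm d1)\<^sup>2 \<le> (L\<^sup>2 * \<eta>\<^sup>2) * (2 * (norm (w1 - w0 - d1))\<^sup>2 + 2 * (norm d0)\<^sup>2)" .
    show "(norm (F (x (Suc k)) + \<xi> (Suc k)))\<^sup>2
                     + 2 * (L\<^sup>2 * \<eta>\<^sup>2) / (1 - 2 * (L\<^sup>2 * \<eta>\<^sup>2)) * (norm (F (x (Suc k)) - F (y k)))\<^sup>2
                   \<le> (norm (F (x k) + \<xi> k))\<^sup>2 + 2 * (L\<^sup>2 * \<eta>\<^sup>2) / (1 - 2 * (L\<^sup>2 * \<eta>\<^sup>2)) * (norm (F (x k) - F (y (k - 1))))\<^sup>2
                     - ((1 - 4 * (L\<^sup>2 * \<eta>\<^sup>2)) / (1 - 2 * (L\<^sup>2 * \<eta>\<^sup>2)))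
                       * (norm (F (y k) - F (x k) + \<xi> (Suc k) - \<xi> k))\<^sup>2"
      unfolding z w1_def[symmetric] w0_def[symmetric] d1_def[symmetric] d0_def[symmetric]
      by (rule p2_scalar[OF A B]) (use small in auto)
  qed
  show ?thesis
  proof (intro conjI impI)
    show "\<forall>k\<ge>1. (norm (F (x k) + \<xi> k))\<^sup>2 \<le>
            (5 * L\<^sup>2 * \<eta>\<^sup>2 + 3) / (3 * \<eta>\<^sup>2) * (norm (x k - y k))\<^sup>2
          + (5 * L\<^sup>2 * \<eta>\<^sup>2 + 3) / (5 * \<eta>\<^sup>2) * (norm (x k - y (k - 1)))\<^sup>2" by (rule part1)
    assume h: "sqrt 2 * L * \<eta> < 1"
    have "(sqrt 2 * L * \<eta>)\<^sup>2 < 1"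
      using h L0 eta by (smt (verit) mult_nonneg_nonneg power_less_one_iff real_sqrt_ge_zero zero_less_power2 abs_square_less_1)
    hence small: "2 * (L\<^sup>2 * \<eta>\<^sup>2) < 1" by (simp add: power_mult_distrib)
    show "let \<omega> = 2 * L\<^sup>2 * \<eta>\<^sup>2 / (1 - 2 * L\<^sup>2 * \<eta>\<^sup>2) in
            \<forall>k\<ge>1. (norm (F (x (Suc k)) + \<xi> (Suc k)))\<^sup>2
                     + \<omega> * (norm (F (x (Suc k)) - F (y k)))\<^sup>2
                   \<le> (norm (F (x k) + \<xi> k))\<^sup>2 + \<omega> * (norm (F (x k) - F (y (k - 1))))\<^sup>2
                     - ((1 - 4 * L\<^sup>2 * \<eta>\<^sup>2) / (1 - 2 * L\<^sup>2 * \<eta>\<^sup>2))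
                       * (norm (F (y k) - F (x k) + \<xi> (Suc k) - \<xi> k))\<^sup>2"
      using part2[OF small] unfolding Let_def by (simp add: mult.assoc)
  qed
qed

end
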